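(* Let $\boldsymbol{k}$ be a field of characteristic zero, $P=\boldsymbol{k}[x^1,\dots,x^n]$ with a symplectic Poisson bracket $\{\ ,\ \}$, $I\subseteq P$ a Poisson ideal, $A=P/I$, and $(\Omega_{A|\boldsymbol{k}})^\sharp\subseteq\operatorname{Der}(A)$ the $A$-submodule generated by the classes $\{a,\ \}+I\operatorname{Der}(P)$, $a\in P$. (1) There is a well-defined $A$-bilinear map $\omega^{\mathrm{Ham}}:(\Omega_{A|\boldsymbol{k}})^\sharp\times\operatorname{Der}(A)\to A$ determined by $\omega^{\mathrm{Ham}}(\{a,\ \}+I\operatorname{Der}(P),\,X+I\operatorname{Der}(P))=X(a)+I$ for $a\in P$, $X\in\operatorname{Der}_I(P)$, i.e. the value does not depend on the chosen representatives $a$ and $X$. (2) Let $\delta^{\mathrm{Ham}}$ be the naive de Rham differential of the Lie-Rinehart algebra $((\Omega_{A|\boldsymbol{k}})^\sharp,A)$. Then the restriction of $\omega^{\mathrm{Ham}}$ to $(\Omega_{A|\boldsymbol{k}})^\sharp\times(\Omega_{A|\boldsymbol{k}})^\sharp$, viewed as an element of $\operatorname{Alt}^2_A((\Omega_{A|\boldsymbol{k}})^\sharp,A)$, satisfies $\delta^{\mathrm{Ham}}\omega^{\mathrm{Ham}}=0$.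
   Context: The Poisson bracket is symplectic: its Poisson tensor $\Pi^{ij}=\{x^i,x^j\}\in P$ is non-degenerate (invertible). A Poisson ideal is an ideal with $\{I,P\}\subseteq I$. $\operatorname{Der}_I(P)=\{X\in\operatorname{Der}(P):X(I)\subseteq I\}$ and $\operatorname{Der}(A)\cong\operatorname{Der}_I(P)/I\operatorname{Der}(P)$. For a Lie-Rinehart algebra $(L,A)$ (a $\boldsymbol{k}$-Lie algebra and $A$-module $L$ acting on $A$ by derivations with $[X,aY]=X(a)Y+a[X,Y]$, $(aX)(b)=aX(b)$), the naive de Rham complex has cochains $\operatorname{Alt}^m_A(L,A)$ (alternating $A$-multilinear maps $L^m\to A$) and differential given by the Koszul formula $(\mathrm d\omega)(X_0,\dots,X_m)=\sum_i(-1)^iX_i(\omega(X_0,\dots,\widehat{X_i},\dots,X_m))+\sum_{i<j}(-1)^{i+j}\omega([X_i,X_j],X_0,\dots,\widehat{X_i},\dots,\widehat{X_j},\dots,X_m)$. $(\Omega_{A|\boldsymbol{k}})^\sharp$ is a Lie-Rinehart subalgebra of $(\operatorname{Der}(A),A)$ with the commutator bracket. *)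

theory Defs
  imports Main "HOL-Library.Poly_Mapping"
begin

text \<open>The polynomial ring P = k[x_i : i in 'n] (the finite type 'n indexes the n variables).\<close>
type_synonym ('n, 'k) mpoly = "('n \<Rightarrow>\<^sub>0 nat) \<Rightarrow>\<^sub>0 'k"

definition Var :: "'n \<Rightarrow> ('n, 'k::comm_ring_1) mpoly" where
  "Var i = Poly_Mapping.single (Poly_Mapping.single i 1) 1"

definition Const :: "'k \<Rightarrow> ('n, 'k::comm_ring_1) mpoly" where
  "Const c = Poly_Mapping.single 0 c"

definition Der :: "(('n, 'k::comm_ring_1) mpoly \<Rightarrow> ('n, 'k) mpoly) set" where
  "Der = {D. (\<forall>p q. D (p + q) = D p + D q) \<and> (\<forall>c p. D (Const c * p) = Const c * D p)
              \<and> (\<forall>p q. D (p * q) = p * D q + q * D p)}"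

text \<open>Poisson bracket on P: k-bilinear (via derivation property in the second slot and
  antisymmetry), antisymmetric, Leibniz, Jacobi.\<close>
definition poisson_bracket :: "(('n, 'k::comm_ring_1) mpoly \<Rightarrow> ('n, 'k) mpoly \<Rightarrow> ('n, 'k) mpoly) \<Rightarrow> bool" where
  "poisson_bracket pb \<longleftrightarrow> (\<forall>a. pb a \<in> Der) \<and> (\<forall>a b. pb a b = - pb b a)
     \<and> (\<forall>a b c. pb a (pb b c) + pb b (pb c a) + pb c (pb a b) = 0)"

text \<open>Symplectic: the Poisson tensor (pb x_i x_j) is invertible as a matrix over P.\<close>
definition symplectic :: "(('n::finite, 'k::comm_ring_1) mpoly \<Rightarrow> ('n, 'k) mpoly \<Rightarrow> ('n, 'k) mpoly) \<Rightarrow> bool" where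
  "symplectic pb \<longleftrightarrow> (\<exists>Q :: 'n \<Rightarrow> 'n \<Rightarrow> ('n, 'k) mpoly.
      (\<forall>i j. (\<Sum>l\<in>UNIV. pb (Var i) (Var l) * Q l j) = (if i = j then 1 else 0)) \<and>
      (\<forall>i j. (\<Sum>l\<in>UNIV. Q i l * pb (Var l) (Var j)) = (if i = j then 1 else 0)))"

definition is_ideal :: "'a::comm_ring_1 set \<Rightarrow> bool" where
  "is_ideal I \<longleftrightarrow> 0 \<in> I \<and> (\<forall>x\<in>I. \<forall>y\<in>I. x + y \<in> I) \<and> (\<forall>p. \<forall>x\<in>I. p * x \<in> I)"

definition poisson_ideal :: "(('n, 'k::comm_ring_1) mpoly \<Rightarrow> ('n, 'k) mpoly \<Rightarrow> ('n, 'k) mpoly) \<Rightarrow> ('n, 'k) mpoly set \<Rightarrow> bool" where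
  "poisson_ideal pb I \<longleftrightarrow> is_ideal I \<and> (\<forall>x\<in>I. \<forall>p. pb x p \<in> I)"

definition scal :: "'a::comm_ring_1 \<Rightarrow> ('a \<Rightarrow> 'a) \<Rightarrow> ('a \<Rightarrow> 'a)" where
  "scal c D = (\<lambda>p. c * D p)"

definition addD :: "('a::comm_ring_1 \<Rightarrow> 'a) \<Rightarrow> ('a \<Rightarrow> 'a) \<Rightarrow> ('a \<Rightarrow> 'a)" where
  "addD D E = (\<lambda>p. D p + E p)"

definition subD :: "('a::comm_ring_1 \<Rightarrow> 'a) \<Rightarrow> ('a \<Rightarrow> 'a) \<Rightarrow> ('a \<Rightarrow> 'a)" where
  "subD D E = (\<lambda>p. D p - E p)"

definition commD :: "('a \<Rightarrow> 'a::comm_ring_1) \<Rightarrow> ('a \<Rightarrow> 'a) \<Rightarrow> ('a \<Rightarrow> 'a)" where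
  "commD D E = (\<lambda>p. D (E p) - E (D p))"

inductive_set IDer :: "('n, 'k::comm_ring_1) mpoly set \<Rightarrow> (('n, 'k) mpoly \<Rightarrow> ('n, 'k) mpoly) set"
  for I where
    zero: "(\<lambda>_. 0) \<in> IDer I"
  | step: "D \<in> IDer I \<Longrightarrow> i \<in> I \<Longrightarrow> E \<in> Der \<Longrightarrow> addD D (scal i E) \<in> IDer I"

definition DerI :: "('n, 'k::comm_ring_1) mpoly set \<Rightarrow> (('n, 'k) mpoly \<Rightarrow> ('n, 'k) mpoly) set" where
  "DerI I = {X \<in> Der. \<forall>p\<in>I. X p \<in> I}"

text \<open>Congruence modulo I Der(P) (equality of classes in Der(A)).\<close>
definition congD :: "('n, 'k::comm_ring_1) mpoly set \<Rightarrow> (('n, 'k) mpoly \<Rightarrow> ('n, 'k) mpoly) \<Rightarrow> (('n, 'k) mpoly \<Rightarrow> ('n, 'k) mpoly) \<Rightarrow> bool" where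
  "congD I D E \<longleftrightarrow> subD D E \<in> IDer I"

inductive_set HamComb :: "(('n, 'k::comm_ring_1) mpoly \<Rightarrow> ('n, 'k) mpoly \<Rightarrow> ('n, 'k) mpoly) \<Rightarrow> (('n, 'k) mpoly \<Rightarrow> ('n, 'k) mpoly) set"
  for pb where
    zero: "(\<lambda>_. 0) \<in> HamComb pb"
  | step: "D \<in> HamComb pb \<Longrightarrow> addD D (scal c (pb a)) \<in> HamComb pb"

text \<open>Representatives in Der_I(P) of elements of (Omega_{A|k})^sharp, a submodule of Der(A).\<close>
definition Sharp :: "(('n, 'k::comm_ring_1) mpoly \<Rightarrow> ('n, 'k) mpoly \<Rightarrow> ('n, 'k) mpoly) \<Rightarrow> ('n, 'k) mpoly set \<Rightarrow> (('n, 'k) mpoly \<Rightarrow> ('n, 'k) mpoly) set" where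
  "Sharp pb I = {D \<in> DerI I. \<exists>H\<in>HamComb pb. congD I D H}"

text \<open>Congruence modulo I (equality in A = P/I).\<close>
definition cong :: "'a::comm_ring_1 set \<Rightarrow> 'a \<Rightarrow> 'a \<Rightarrow> bool" where
  "cong I p q \<longleftrightarrow> p - q \<in> I"

text \<open>w (on representatives) induces a well-defined A-bilinear map
  Sharp/IDer x Der_I/IDer \<rightarrow> P/I with w({a,_}, X) = X(a) mod I.\<close>
definition omegaHam :: "(('n, 'k::comm_ring_1) mpoly \<Rightarrow> ('n, 'k) mpoly \<Rightarrow> ('n, 'k) mpoly) \<Rightarrow> ('n, 'k) mpoly set
    \<Rightarrow> ((('n, 'k) mpoly \<Rightarrow> ('n, 'k) mpoly) \<Rightarrow> (('n, 'k) mpoly \<Rightarrow> ('n, 'k) mpoly) \<Rightarrow> ('n, 'k) mpoly) \<Rightarrow> bool" where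
  "omegaHam pb I w \<longleftrightarrow>
     \<comment> \<open>well-defined on classes\<close>
     (\<forall>D\<in>Sharp pb I. \<forall>D'\<in>Sharp pb I. \<forall>X\<in>DerI I. \<forall>X'\<in>DerI I.
        congD I D D' \<longrightarrow> congD I X X' \<longrightarrow> cong I (w D X) (w D' X')) \<and>
     \<comment> \<open>A-linear in the first argument\<close>
     (\<forall>D\<in>Sharp pb I. \<forall>E\<in>Sharp pb I. \<forall>X\<in>DerI I. \<forall>c.
        cong I (w (addD D (scal c E)) X) (w D X + c * w E X)) \<and>
     \<comment> \<open>A-linear in the second argument\<close>
     (\<forall>D\<in>Sharp pb I. \<forall>X\<in>DerI I. \<forall>Y\<in>DerI I. \<forall>c.
        cong I (w D (addD X (scal c Y))) (w D X + c * w D Y)) \<and>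
     \<comment> \<open>defining formula\<close>
     (\<forall>a. \<forall>X\<in>DerI I. cong I (w (pb a) X) (X a))"

definition dR2 :: "((('a::comm_ring_1) \<Rightarrow> 'a) \<Rightarrow> ('a \<Rightarrow> 'a) \<Rightarrow> 'a) \<Rightarrow> ('a \<Rightarrow> 'a) \<Rightarrow> ('a \<Rightarrow> 'a) \<Rightarrow> ('a \<Rightarrow> 'a) \<Rightarrow> 'a" where
  "dR2 w X0 X1 X2 =
      X0 (w X1 X2) - X1 (w X0 X2) + X2 (w X0 X1)
    - w (commD X0 X1) X2 + w (commD X0 X2) X1 - w (commD X1 X2) X0"

end

theory Submission
  imports Defs
begin

lemma pm_induct:
  fixes P :: "('a \<Rightarrow>\<^sub>0 'b::monoid_add) \<Rightarrow> bool"
  assumes "P 0" "\<And>k v. P (Poly_Mapping.single k v)" "\<And>f g. P f \<Longrightarrow> P g \<Longrightarrow> P (f + g)"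
  shows "P f"
proof (induction f rule: update_induct)
  case const then show ?case using assms(1) .
next
  case (update f a b)
  have "Poly_Mapping.update a b f = f + Poly_Mapping.single a b"
    using update(1) by (intro poly_mapping_eqI) (auto simp: lookup_update lookup_add lookup_single in_keys_iff when_def)
  then show ?case using assms(2,3) update by simp
qed

lemma poly_induct:
  fixes P :: "('n, 'k::comm_ring_1) mpoly \<Rightarrow> bool"
  assumes C: "\<And>c. P (Const c)" and V: "\<And>i. P (Var i)"
    and A: "\<And>p q. P p \<Longrightarrow> P q \<Longrightarrow> P (p + q)" and M: "\<And>p q. P p \<Longrightarrow> P q \<Longrightarrow> P (p * q)"
  shows "P p"
proof -
  have one: "P 1" using C[of 1] by (simp add: Const_def)
  have mon: "P (Poly_Mapping.single \<alpha> 1)" for \<alpha> :: "'n \<Rightarrow>\<^sub>0 nat"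
  proof (induction \<alpha> rule: pm_induct)
    case 1 then show ?case using one by simp
  next
    case (2 i n)
    show ?case
    proof (induction n)
      case 0 then show ?case using one by simp
    next
      case (Suc n)
      have "Poly_Mapping.single (Poly_Mapping.single i (Suc n)) (1::'k) =
         Poly_Mapping.single (Poly_Mapping.single i n) 1 * Var i"
        by (simp add: Var_def mult_single flip: single_add)
      then show ?case using M[OF Suc V] by simp
    qed
  next
    case (3 f g)
    have "Poly_Mapping.single (f + g) (1::'k) = Poly_Mapping.single f 1 * Poly_Mapping.single g 1"
      by (simp add: mult_single)
    then show ?case using M[OF 3] by simp
  qed
  show ?thesis
  proof (induction p rule: pm_induct)
    case 1 then show ?case using C[of 0] by (simp add: Const_def)
  next
    case (2 k v)
    have "Poly_Mapping.single k v = Const v * Poly_Mapping.single k 1"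
      by (simp add: Const_def mult_single)
    then show ?case using M[OF C mon] by simp
  next
    case (3 f g) then show ?case by (rule A)
  qed
qed

lemma Der_add: "D \<in> Der \<Longrightarrow> D (p + q) = D p + D q" by (simp add: Der_def)
lemma Der_mult: "D \<in> Der \<Longrightarrow> D (p * q) = p * D q + q * D p" by (simp add: Der_def)
lemma Der_Constm: "D \<in> Der \<Longrightarrow> D (Const c * p) = Const c * D p" unfolding Der_def by blast
lemma Der_zero: "D \<in> Der \<Longrightarrow> D 0 = 0"
  using Der_add[of D 0 0] by simp
lemma Der_neg: "D \<in> Der \<Longrightarrow> D (- p) = - D p"
  using Der_add[of D p "-p"] Der_zero[of D] by (simp add: eq_neg_iff_add_eq_0 add.commute)
lemma Der_diff: "D \<in> Der \<Longrightarrow> D (p - q) = D p - D q"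
  using Der_add[of D p "-q"] Der_neg[of D q] by simp
lemma Der_one: "D \<in> Der \<Longrightarrow> D 1 = 0"
  using Der_mult[of D 1 1] by simp
lemma Der_Const: "D \<in> Der \<Longrightarrow> D (Const c) = 0"
  using Der_Constm[of D c 1] Der_one[of D] by simp
lemma Der_sum: "D \<in> Der \<Longrightarrow> D (sum f S) = (\<Sum>x\<in>S. D (f x))"
  by (induction S rule: infinite_finite_induct) (auto simp: Der_zero Der_add)

lemma Der_lincomb:
  assumes "\<And>l. l \<in> S \<Longrightarrow> D l \<in> Der"
  shows "(\<lambda>p. \<Sum>l\<in>S. c l * D l p) \<in> Der"
  unfolding Der_def
proof (intro CollectI conjI allI)
  fix p q
  show "(\<Sum>l\<in>S. c l * D l (p + q)) = (\<Sum>l\<in>S. c l * D l p) + (\<Sum>l\<in>S. c l * D l q)"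
    using assms by (simp add: Der_add distrib_left sum.distrib)
  show "(\<Sum>l\<in>S. c l * D l (p * q)) = p * (\<Sum>l\<in>S. c l * D l q) + q * (\<Sum>l\<in>S. c l * D l p)"
    using assms by (simp add: Der_mult distrib_left sum.distrib sum_distrib_left algebra_simps)
next
  fix c' p
  show "(\<Sum>l\<in>S. c l * D l (Const c' * p)) = Const c' * (\<Sum>l\<in>S. c l * D l p)"
    using assms by (simp add: Der_Constm sum_distrib_left mult.left_commute)
qed

lemma commD_Der:
  assumes "D \<in> Der" "E \<in> Der" shows "commD D E \<in> Der"
  unfolding Der_def commD_def
proof (intro CollectI conjI allI)
  fix p q
  show "D (E (p + q)) - E (D (p + q)) = D (E p) - E (D p) + (D (E q) - E (D q))"
    using assms by (simp add: Der_add)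
  show "D (E (p * q)) - E (D (p * q)) = p * (D (E q) - E (D q)) + q * (D (E p) - E (D p))"
    using assms by (simp add: Der_add Der_mult algebra_simps)
next
  fix c p
  show "D (E (Const c * p)) - E (D (Const c * p)) = Const c * (D (E p) - E (D p))"
    using assms by (simp add: Der_Constm right_diff_distrib)
qed

lemma Der_ext:
  assumes "D \<in> Der" "E \<in> Der" "\<And>i. D (Var i) = E (Var i)"
  shows "D = E"
proof
  fix p show "D p = E p"
    by (induction p rule: poly_induct) (use assms in \<open>simp_all add: Der_Const Der_add Der_mult\<close>)
qed

lemma lin_sum:
  assumes lin: "\<And>A B f. F (addD A (scal f B)) = F A + f * F B" and z: "F (\<lambda>_. 0) = 0"
    and "finite S"
  shows "F (\<lambda>p. \<Sum>j\<in>S. c j * D j p) = (\<Sum>j\<in>S. c j * F (D j))"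
  using \<open>finite S\<close>
proof (induction S rule: finite_induct)
  case empty then show ?case using z by simp
next
  case (insert j S)
  have "(\<lambda>p. \<Sum>j\<in>insert j S. c j * D j p) = addD (\<lambda>p. \<Sum>j\<in>S. c j * D j p) (scal (c j) (D j))"
    using insert by (auto simp: addD_def scal_def add.commute)
  then show ?case using insert lin by simp
qed

lemma sum_delta_mult: "finite S \<Longrightarrow> i \<in> S \<Longrightarrow> (\<Sum>l\<in>S. f l * (if l = i then 1 else (0::'a::comm_ring_1))) = f i"
  by (simp add: if_distrib[of "\<lambda>x. _ * x"] cong: if_cong)

lemma sum_delta_mult': "finite S \<Longrightarrow> i \<in> S \<Longrightarrow> (\<Sum>l\<in>S. (if i = l then 1 else (0::'a::comm_ring_1)) * f l) = f i"
  by (simp add: if_distrib[of "\<lambda>x. x * _"] cong: if_cong)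

lemma mpoly_double_zero:
  fixes p :: "('n, 'k::field_char_0) mpoly"
  assumes "p + p = 0" shows "p = 0"
proof (rule poly_mapping_eqI)
  fix m
  have "Poly_Mapping.lookup (p + p) m = Poly_Mapping.lookup 0 m" using assms by (simp only:)
  then have "Poly_Mapping.lookup p m + Poly_Mapping.lookup p m = 0" by (simp only: lookup_add lookup_zero)
  then have "2 * Poly_Mapping.lookup p m = 0" by (simp only: mult_2)
  then show "Poly_Mapping.lookup p m = Poly_Mapping.lookup 0 m" by simp
qed

locale sympl =
  fixes pb :: "('n::finite, 'k::field_char_0) mpoly \<Rightarrow> ('n, 'k) mpoly \<Rightarrow> ('n, 'k) mpoly"
    and Q :: "'n \<Rightarrow> 'n \<Rightarrow> ('n, 'k) mpoly"
  assumes PB: "poisson_bracket pb"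
    and R: "\<And>i j. (\<Sum>l\<in>UNIV. pb (Var i) (Var l) * Q l j) = (if i = j then 1 else 0)"
    and L: "\<And>i j. (\<Sum>l\<in>UNIV. Q i l * pb (Var l) (Var j)) = (if i = j then 1 else 0)"
begin

lemma pb_Der: "pb a \<in> Der" using PB unfolding poisson_bracket_def by blast
lemma pb_anti: "pb a b = - pb b a" using PB unfolding poisson_bracket_def by blast
lemma pb_jacobi: "pb a (pb b c) + pb b (pb c a) + pb c (pb a b) = 0"
  using PB unfolding poisson_bracket_def by blast

lemma pb_left_Der: "(\<lambda>a. pb a b) \<in> Der"
proof -
  have "(\<lambda>a. pb a b) = (\<lambda>a. \<Sum>l\<in>{()}. (-1) * pb b a)"
    by (rule ext) (simp add: pb_anti[of _ b])
  also have "\<dots> \<in> Der" by (rule Der_lincomb) (rule pb_Der)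
  finally show ?thesis .
qed

definition gco where "gco D j = (\<Sum>l\<in>UNIV. D (Var l) * Q l j)"
definition W where "W D X = (\<Sum>j\<in>UNIV. gco D j * X (Var j))"

lemma W_alt: "W D X = (\<Sum>l\<in>UNIV. (\<Sum>j\<in>UNIV. Q l j * X (Var j)) * D (Var l))"
proof -
  have "W D X = (\<Sum>j\<in>UNIV. \<Sum>l\<in>UNIV. D (Var l) * Q l j * X (Var j))"
    by (simp add: W_def gco_def sum_distrib_right)
  also have "\<dots> = (\<Sum>l\<in>UNIV. \<Sum>j\<in>UNIV. D (Var l) * Q l j * X (Var j))"
    by (rule sum.swap)
  also have "\<dots> = (\<Sum>l\<in>UNIV. (\<Sum>j\<in>UNIV. Q l j * X (Var j)) * D (Var l))"
    by (simp add: sum_distrib_right sum_distrib_left mult_ac)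
  finally show ?thesis .
qed

lemma decomp:
  assumes "D \<in> Der" shows "D = (\<lambda>p. \<Sum>j\<in>UNIV. gco D j * pb (Var j) p)"
proof (rule Der_ext[OF assms Der_lincomb[OF pb_Der]])
  fix i
  have "(\<Sum>j\<in>UNIV. gco D j * pb (Var j) (Var i)) =
        (\<Sum>l\<in>UNIV. D (Var l) * (\<Sum>j\<in>UNIV. Q l j * pb (Var j) (Var i)))"
  proof -
    have "(\<Sum>j\<in>UNIV. gco D j * pb (Var j) (Var i)) =
        (\<Sum>j\<in>UNIV. \<Sum>l\<in>UNIV. D (Var l) * Q l j * pb (Var j) (Var i))"
      by (simp add: gco_def sum_distrib_right)
    also have "\<dots> = (\<Sum>l\<in>UNIV. \<Sum>j\<in>UNIV. D (Var l) * Q l j * pb (Var j) (Var i))"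
      by (rule sum.swap)
    also have "\<dots> = (\<Sum>l\<in>UNIV. D (Var l) * (\<Sum>j\<in>UNIV. Q l j * pb (Var j) (Var i)))"
      by (simp add: sum_distrib_left mult_ac)
    finally show ?thesis .
  qed
  also have "\<dots> = D (Var i)" by (simp add: L sum_delta_mult)
  finally show "D (Var i) = (\<Sum>j\<in>UNIV. gco D j * pb (Var j) (Var i))" by simp
qed

lemma W_pb:
  assumes X: "X \<in> Der" shows "W (pb a) X = X a"
proof -
  let ?c = "\<lambda>l. \<Sum>j\<in>UNIV. Q l j * X (Var j)"
  have "(\<lambda>a. \<Sum>l\<in>UNIV. ?c l * pb a (Var l)) = X"
  proof (rule Der_ext[OF Der_lincomb[OF pb_left_Der] X])
    fix i
    have "(\<Sum>l\<in>UNIV. ?c l * pb (Var i) (Var l)) =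
          (\<Sum>j\<in>UNIV. (\<Sum>l\<in>UNIV. pb (Var i) (Var l) * Q l j) * X (Var j))"
    proof -
      have "(\<Sum>l\<in>UNIV. ?c l * pb (Var i) (Var l)) =
          (\<Sum>l\<in>UNIV. \<Sum>j\<in>UNIV. pb (Var i) (Var l) * Q l j * X (Var j))"
        by (simp add: sum_distrib_right sum_distrib_left mult_ac)
      also have "\<dots> = (\<Sum>j\<in>UNIV. \<Sum>l\<in>UNIV. pb (Var i) (Var l) * Q l j * X (Var j))"
        by (rule sum.swap)
      also have "\<dots> = (\<Sum>j\<in>UNIV. (\<Sum>l\<in>UNIV. pb (Var i) (Var l) * Q l j) * X (Var j))"
        by (simp add: sum_distrib_right)
      finally show ?thesis .
    qed
    also have "\<dots> = X (Var i)" by (simp add: R sum_delta_mult')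
    finally show "(\<Sum>l\<in>UNIV. ?c l * pb (Var i) (Var l)) = X (Var i)" .
  qed
  then show ?thesis by (simp add: W_alt fun_eq_iff mult.commute)
qed

lemma W_lin1: "W (\<lambda>p. A p + f * B p) X = W A X + f * W B X"
  unfolding W_def gco_def
  by (simp add: sum.distrib sum_distrib_left sum_distrib_right algebra_simps)
lemma W_lin2: "W D (\<lambda>p. A p + f * B p) = W D A + f * W D B"
  unfolding W_def gco_def
  by (simp add: sum.distrib sum_distrib_left sum_distrib_right algebra_simps)
lemma W_lin3: "W (\<lambda>p. C p + f * E p - g * F p) Y = W C Y + f * W E Y - g * W F Y"
  unfolding W_def gco_def
  by (simp add: sum.distrib sum_distrib_left sum_distrib_right sum_subtractf algebra_simps)
lemma W_neg1: "W (\<lambda>p. - A p) X = - W A X"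
  unfolding W_def gco_def
  by (simp add: sum_negf)
lemma W_sub1: "W (\<lambda>p. A p - B p) X = W A X - W B X"
  unfolding W_def gco_def
  by (simp add: sum_subtractf left_diff_distrib)
lemma W_sub2: "W D (\<lambda>p. A p - B p) = W D A - W D B"
  unfolding W_def gco_def
  by (simp add: sum_subtractf right_diff_distrib)
lemma W_zero1: "W (\<lambda>_. 0) X = 0" unfolding W_def gco_def by simp
lemma W_zero2: "W D (\<lambda>_. 0) = 0" unfolding W_def gco_def by simp

lemma W_lin1': "W (addD A (scal f B)) X = W A X + f * W B X"
  unfolding addD_def scal_def by (rule W_lin1)
lemma W_lin2': "W D (addD A (scal f B)) = W D A + f * W D B"
  unfolding addD_def scal_def by (rule W_lin2)

definition T where "T X Y = (\<Sum>j\<in>UNIV. \<Sum>k\<in>UNIV. gco X j * gco Y k * pb (Var k) (Var j))"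

lemma W_T: assumes "Y \<in> Der" shows "W X Y = T X Y"
proof -
  have Yv: "Y (Var j) = (\<Sum>k\<in>UNIV. gco Y k * pb (Var k) (Var j))" for j
    using fun_cong[OF decomp[OF assms], of "Var j"] .
  show ?thesis unfolding W_def T_def Yv by (simp add: sum_distrib_left mult_ac)
qed

lemma T_anti: "T Y X = - T X Y"
proof -
  have "T Y X = (\<Sum>k\<in>UNIV. \<Sum>j\<in>UNIV. gco Y j * gco X k * pb (Var k) (Var j))"
    unfolding T_def by (rule sum.swap)
  also have "\<dots> = - T X Y"
    unfolding T_def sum_negf[symmetric]
    by (intro sum.cong refl) (subst pb_anti, simp add: mult_ac)
  finally show ?thesis .
qed

lemma W_anti: assumes "X \<in> Der" "Y \<in> Der" shows "W X Y = - W Y X"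
proof -
  have "W X Y = T X Y" by (rule W_T[OF assms(2)])
  also have "\<dots> = - T Y X" by (subst T_anti[of X Y]) simp
  also have "T Y X = W Y X" by (rule W_T[OF assms(1), symmetric])
  finally show ?thesis .
qed

lemma W_self: "X \<in> Der \<Longrightarrow> W X X = 0"
proof -
  assume X: "X \<in> Der"
  have h: "W X X = - W X X" using W_anti[OF X X] .
  have "W X X + W X X = 0" using h unfolding eq_neg_iff_add_eq_0 .
  then show ?thesis by (rule mpoly_double_zero)
qed

lemma commD_addD:
  assumes "X \<in> Der"
  shows "commD (addD A (scal f B)) X = (\<lambda>p. commD A X p + f * commD B X p - X f * B p)"
  by (rule ext) (simp add: commD_def addD_def scal_def Der_add[OF assms] Der_mult[OF assms] algebra_simps)

lemma dR2_lin1: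
  assumes X1: "X1 \<in> Der" and X2: "X2 \<in> Der"
  shows "dR2 W (addD A (scal f B)) X1 X2 = dR2 W A X1 X2 + f * dR2 W B X1 X2"
proof -
  have h4: "W (commD (addD A (scal f B)) X1) X2 = W (commD A X1) X2 + f * W (commD B X1) X2 - X1 f * W B X2"
    unfolding commD_addD[OF X1] by (rule W_lin3)
  have h5: "W (commD (addD A (scal f B)) X2) X1 = W (commD A X2) X1 + f * W (commD B X2) X1 - X2 f * W B X1"
    unfolding commD_addD[OF X2] by (rule W_lin3)
  have h0: "addD A (scal f B) p = A p + f * B p" for p by (simp add: addD_def scal_def)
  show ?thesis
    unfolding dR2_def h4 h5 h0 W_lin1' W_lin2'
    by (simp add: Der_add[OF X1] Der_add[OF X2] Der_mult[OF X1] Der_mult[OF X2] algebra_simps)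
qed

lemma dR2_zero:
  assumes X1: "X1 \<in> Der" and X2: "X2 \<in> Der"
  shows "dR2 W (\<lambda>_. 0) X1 X2 = 0"
proof -
  have c: "commD (\<lambda>_. 0) X = (\<lambda>_. 0)" if "X \<in> Der" for X
    using that by (simp add: commD_def Der_zero fun_eq_iff)
  show ?thesis unfolding dR2_def c[OF X1] c[OF X2]
    by (simp add: W_zero1 W_zero2 Der_zero X1 X2)
qed

lemma dR2_anti:
  assumes X0: "X0 \<in> Der" and X1: "X1 \<in> Der" and X2: "X2 \<in> Der"
  shows "dR2 W X0 X1 X2 = - dR2 W X1 X0 X2"
proof -
  have c: "commD X1 X0 = (\<lambda>p. - commD X0 X1 p)" by (simp add: commD_def fun_eq_iff)
  show ?thesis unfolding dR2_def c W_neg1 W_anti[OF X1 X0]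
    by (simp add: Der_neg[OF X2] algebra_simps)
qed

lemma comm_pb: "commD (pb b) (pb a) = pb (pb b a)"
proof
  fix p
  have "pb b (pb a p) + pb a (pb p b) + pb p (pb b a) = 0" by (rule pb_jacobi)
  moreover have "pb p b = - pb b p" by (rule pb_anti)
  moreover have "pb p (pb b a) = - pb (pb b a) p" by (rule pb_anti)
  ultimately show "commD (pb b) (pb a) p = pb (pb b a) p"
    by (simp add: commD_def Der_neg[OF pb_Der] algebra_simps)
qed

lemma dR2_ham:
  assumes X: "X \<in> Der" shows "dR2 W (pb b) (pb a) X = 0"
proof -
  have e1: "W (commD (pb b) X) (pb a) = - commD (pb b) X a"
    using W_anti[OF pb_Der commD_Der[OF pb_Der X], of a b] W_pb[OF commD_Der[OF pb_Der X]] by simp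
  have e2: "W (commD (pb a) X) (pb b) = - commD (pb a) X b"
    using W_anti[OF pb_Der commD_Der[OF pb_Der X], of b a] W_pb[OF commD_Der[OF pb_Der X]] by simp
  show ?thesis
    unfolding dR2_def e1 e2 comm_pb W_pb[OF X] W_pb[OF pb_Der]
    by (simp add: commD_def)
qed

lemma dR2_closed:
  assumes X0: "X0 \<in> Der" and X1: "X1 \<in> Der" and X2: "X2 \<in> Der"
  shows "dR2 W X0 X1 X2 = 0"
proof -
  have s1: "dR2 W (pb a) Y X2 = 0" if Y: "Y \<in> Der" for a Y
  proof -
    have "dR2 W Y (pb a) X2 = dR2 W (\<lambda>p. \<Sum>j\<in>UNIV. gco Y j * pb (Var j) p) (pb a) X2"
      using decomp[OF Y] by simp
    also have "\<dots> = (\<Sum>j\<in>UNIV. gco Y j * dR2 W (pb (Var j)) (pb a) X2)"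
      by (rule lin_sum[where F = "\<lambda>A. dR2 W A (pb a) X2"])
         (auto intro: dR2_lin1 dR2_zero pb_Der X2)
    also have "\<dots> = 0" by (simp add: dR2_ham[OF X2])
    finally show ?thesis using dR2_anti[OF pb_Der Y X2, of a] by simp
  qed
  have "dR2 W X0 X1 X2 = dR2 W (\<lambda>p. \<Sum>j\<in>UNIV. gco X0 j * pb (Var j) p) X1 X2"
    using decomp[OF X0] by simp
  also have "\<dots> = (\<Sum>j\<in>UNIV. gco X0 j * dR2 W (pb (Var j)) X1 X2)"
    by (rule lin_sum[where F = "\<lambda>A. dR2 W A X1 X2"])
       (auto intro: dR2_lin1 dR2_zero X1 X2)
  also have "\<dots> = 0" by (simp add: s1[OF X1])
  finally show ?thesis .
qed

end

lemma ideal_0: "is_ideal I \<Longrightarrow> 0 \<in> I" by (simp add: is_ideal_def)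
lemma ideal_add: "is_ideal I \<Longrightarrow> x \<in> I \<Longrightarrow> y \<in> I \<Longrightarrow> x + y \<in> I" by (simp add: is_ideal_def)
lemma ideal_multl: "is_ideal I \<Longrightarrow> x \<in> I \<Longrightarrow> p * x \<in> I" by (simp add: is_ideal_def)
lemma ideal_multr: "is_ideal I \<Longrightarrow> x \<in> I \<Longrightarrow> x * p \<in> I"
  using ideal_multl[of I x p] by (simp add: mult.commute)
lemma ideal_neg: "is_ideal I \<Longrightarrow> x \<in> I \<Longrightarrow> - x \<in> I"
  using ideal_multl[of I x "-1"] by simp
lemma ideal_diff: "is_ideal I \<Longrightarrow> x \<in> I \<Longrightarrow> y \<in> I \<Longrightarrow> x - y \<in> I"
  using ideal_add[of I x "-y"] ideal_neg[of I y] by simp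
lemma ideal_sum: "is_ideal I \<Longrightarrow> (\<And>x. x \<in> S \<Longrightarrow> f x \<in> I) \<Longrightarrow> sum f S \<in> I"
  by (induction S rule: infinite_finite_induct) (auto simp: ideal_0 ideal_add)

lemma IDer_in: "Z \<in> IDer I \<Longrightarrow> is_ideal I \<Longrightarrow> Z p \<in> I"
  by (induction rule: IDer.induct) (auto simp: ideal_0 addD_def scal_def intro!: ideal_add ideal_multr)

lemma cong_refl: "is_ideal I \<Longrightarrow> cong I a a" by (simp add: cong_def ideal_0)
lemma cong_eq: "is_ideal I \<Longrightarrow> a = b \<Longrightarrow> cong I a b" by (simp add: cong_def ideal_0)
lemma cong_sym: "is_ideal I \<Longrightarrow> cong I a b \<Longrightarrow> cong I b a"
  unfolding cong_def using ideal_neg[of I "a - b"] by simp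
lemma cong_trans: "is_ideal I \<Longrightarrow> cong I a b \<Longrightarrow> cong I b c \<Longrightarrow> cong I a c"
  unfolding cong_def using ideal_add[of I "a - b" "b - c"] by simp
lemma cong_add: "is_ideal I \<Longrightarrow> cong I a b \<Longrightarrow> cong I c d \<Longrightarrow> cong I (a + c) (b + d)"
  unfolding cong_def using ideal_add[of I "a - b" "c - d"] by (simp add: algebra_simps)
lemma cong_sub: "is_ideal I \<Longrightarrow> cong I a b \<Longrightarrow> cong I c d \<Longrightarrow> cong I (a - c) (b - d)"
  unfolding cong_def using ideal_diff[of I "a - b" "c - d"] by (simp add: algebra_simps)
lemma cong_mult: "is_ideal I \<Longrightarrow> cong I a b \<Longrightarrow> cong I (c * a) (c * b)"
  unfolding cong_def using ideal_multl[of I "a - b" c] by (simp add: algebra_simps)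
lemma cong_DerI: "X \<in> DerI I \<Longrightarrow> cong I a b \<Longrightarrow> cong I (X a) (X b)"
  unfolding cong_def DerI_def by (auto simp: Der_diff[symmetric])

context sympl
begin

lemma W_I1: assumes "is_ideal I" "\<And>p. Z p \<in> I" shows "W Z X \<in> I"
  unfolding W_def gco_def using assms
  by (auto intro!: ideal_sum ideal_multr)

lemma W_I2: assumes "is_ideal I" "\<And>p. Z p \<in> I" shows "W D Z \<in> I"
  unfolding W_def gco_def using assms
  by (auto intro!: ideal_sum ideal_multl)

lemma part1:
  assumes PI: "poisson_ideal pb I"
  shows "omegaHam pb I W"
proof -
  have ideal: "is_ideal I" using PI by (simp add: poisson_ideal_def)
  show ?thesis
    unfolding omegaHam_def
  proof (intro conjI ballI allI impI)
    fix D D' X X'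
    assume "congD I D D'" "congD I X X'"
    then have z1: "\<And>p. subD D D' p \<in> I" and z2: "\<And>p. subD X X' p \<in> I"
      using IDer_in ideal by (auto simp: congD_def)
    have "W D X - W D' X' = W (subD D D') X + W D' (subD X X')"
      unfolding subD_def W_sub1 W_sub2 by simp
    also have "\<dots> \<in> I"
    proof (rule ideal_add[OF ideal])
      show "W (subD D D') X \<in> I" by (rule W_I1[OF ideal]) (rule z1)
      show "W D' (subD X X') \<in> I" by (rule W_I2[OF ideal]) (rule z2)
    qed
    finally show "cong I (W D X) (W D' X')" by (simp add: cong_def)
  next
    fix D E X c
    show "cong I (W (addD D (scal c E)) X) (W D X + c * W E X)"
      using ideal by (simp add: W_lin1' cong_refl)
  next
    fix D X Y c
    show "cong I (W D (addD X (scal c Y))) (W D X + c * W D Y)"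
      using ideal by (simp add: W_lin2' cong_refl)
  next
    fix a X assume "X \<in> DerI I"
    then have "X \<in> Der" by (simp add: DerI_def)
    then show "cong I (W (pb a) X) (X a)" using ideal by (simp add: W_pb cong_refl)
  qed
qed

lemma pb_I: assumes "poisson_ideal pb I" "p \<in> I" shows "pb a p \<in> I"
proof -
  have "pb p a \<in> I" using assms by (simp add: poisson_ideal_def)
  then have "- pb p a \<in> I" using assms(1) ideal_neg by (auto simp: poisson_ideal_def)
  then show ?thesis using pb_anti[of a p] by simp
qed

lemma commD_DerI: "X \<in> DerI I \<Longrightarrow> Y \<in> DerI I \<Longrightarrow> is_ideal I \<Longrightarrow> commD X Y \<in> DerI I"
proof -
  assume a: "X \<in> DerI I" "Y \<in> DerI I" "is_ideal I"
  have "commD X Y \<in> Der" using a by (intro commD_Der) (auto simp: DerI_def)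
  moreover have "\<forall>p\<in>I. commD X Y p \<in> I" using a by (auto intro!: ideal_diff simp: commD_def DerI_def)
  ultimately show ?thesis by (simp add: DerI_def)
qed

lemma Tsum_HamComb: "finite S \<Longrightarrow> (\<lambda>p. \<Sum>j\<in>S. c j * pb (Var j) p) \<in> HamComb pb"
proof (induction S rule: finite_induct)
  case empty then show ?case by (simp add: HamComb.zero)
next
  case (insert j S)
  have "(\<lambda>p. \<Sum>j\<in>insert j S. c j * pb (Var j) p) = addD (\<lambda>p. \<Sum>j\<in>S. c j * pb (Var j) p) (scal (c j) (pb (Var j)))"
    using insert by (auto simp: addD_def scal_def add.commute)
  then show ?case using HamComb.step[OF insert(3)] by simp
qed

lemma Tsum_DerI: assumes "poisson_ideal pb I"
  shows "(\<lambda>p. \<Sum>j\<in>S. c j * pb (Var j) p) \<in> DerI I"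
proof -
  have ideal: "is_ideal I" using assms by (simp add: poisson_ideal_def)
  show ?thesis unfolding DerI_def
    using Der_lincomb[OF pb_Der] pb_I[OF assms] ideal
    by (auto intro!: ideal_sum ideal_multl)
qed

lemma DerI_Sharp: assumes "poisson_ideal pb I" "D \<in> DerI I" shows "D \<in> Sharp pb I"
proof -
  have ideal: "is_ideal I" using assms by (simp add: poisson_ideal_def)
  have "D \<in> Der" using assms by (simp add: DerI_def)
  then have "D = (\<lambda>p. \<Sum>j\<in>UNIV. gco D j * pb (Var j) p)" by (rule decomp)
  then have "D \<in> HamComb pb" using Tsum_HamComb[of UNIV "gco D"] by simp
  moreover have "congD I D D"
    unfolding congD_def subD_def using IDer.zero by simp
  ultimately show ?thesis using assms unfolding Sharp_def by blast
qed

lemma Sharp_DerI: "D \<in> Sharp pb I \<Longrightarrow> D \<in> DerI I" by (simp add: Sharp_def)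

lemma cong_0: "is_ideal I \<Longrightarrow> cong I a b \<Longrightarrow> b \<in> I \<Longrightarrow> a \<in> I"
  unfolding cong_def using ideal_add[of I "a - b" b] by simp

lemma w_W:
  assumes w: "omegaHam pb I w" and PI: "poisson_ideal pb I"
    and D: "D \<in> DerI I" and X: "X \<in> DerI I"
  shows "cong I (w D X) (W D X)"
proof -
  have ideal: "is_ideal I" using PI by (simp add: poisson_ideal_def)
  have lin: "\<And>D E X c. D \<in> Sharp pb I \<Longrightarrow> E \<in> Sharp pb I \<Longrightarrow> X \<in> DerI I \<Longrightarrow>
        cong I (w (addD D (scal c E)) X) (w D X + c * w E X)"
    and def: "\<And>a X. X \<in> DerI I \<Longrightarrow> cong I (w (pb a) X) (X a)"
    using w unfolding omegaHam_def by blast+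
  let ?T = "\<lambda>S p. \<Sum>j\<in>S. gco D j * pb (Var j) p"
  have ShT: "?T S \<in> Sharp pb I" for S by (rule DerI_Sharp[OF PI Tsum_DerI[OF PI]])
  have main: "cong I (w (?T S) X) (\<Sum>j\<in>S. gco D j * X (Var j))" if "finite S" for S
    using that
  proof (induction S rule: finite_induct)
    case empty
    let ?Z = "\<lambda>p::('n, 'k) mpoly. 0::('n, 'k) mpoly"
    have Z: "?Z \<in> Sharp pb I" using ShT[of "{}"] by simp
    have "addD ?Z (scal 1 ?Z) = ?Z" by (simp add: addD_def scal_def)
    then have "cong I (w ?Z X) (w ?Z X + 1 * w ?Z X)" using lin[OF Z Z X, of 1] by simp
    then have "w ?Z X - (w ?Z X + 1 * w ?Z X) \<in> I" by (simp add: cong_def)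
    then have "- (w ?Z X - (w ?Z X + 1 * w ?Z X)) \<in> I" by (rule ideal_neg[OF ideal])
    then show ?case by (simp add: cong_def)
  next
    case (insert j S)
    have eq: "?T (insert j S) = addD (?T S) (scal (gco D j) (pb (Var j)))"
      using insert by (auto simp: addD_def scal_def add.commute)
    have pS: "pb (Var j) \<in> Sharp pb I" using pb_Der pb_I[OF PI] DerI_Sharp[OF PI] by (simp add: DerI_def)
    have "cong I (w (?T (insert j S)) X) (w (?T S) X + gco D j * w (pb (Var j)) X)"
      unfolding eq by (rule lin[OF ShT pS X])
    moreover have "cong I (w (?T S) X + gco D j * w (pb (Var j)) X)
        ((\<Sum>j\<in>S. gco D j * X (Var j)) + gco D j * X (Var j))"
      by (rule cong_add[OF ideal insert(3) cong_mult[OF ideal def[OF X]]])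
    ultimately show ?case using insert cong_trans[OF ideal] by (simp add: add.commute)
  qed
  have "D \<in> Der" using D by (simp add: DerI_def)
  then have "D = ?T UNIV" by (rule decomp)
  then show ?thesis using main[of UNIV] by (simp add: W_def)
qed

lemma part2:
  assumes w: "omegaHam pb I w" and PI: "poisson_ideal pb I"
  shows "(\<forall>D\<in>Sharp pb I. cong I (w D D) 0) \<and>
          (\<forall>X0\<in>Sharp pb I. \<forall>X1\<in>Sharp pb I. \<forall>X2\<in>Sharp pb I.
              cong I (dR2 w X0 X1 X2) 0)"
proof (intro conjI ballI)
  have ideal: "is_ideal I" using PI by (simp add: poisson_ideal_def)
  fix D assume "D \<in> Sharp pb I"
  then have D: "D \<in> DerI I" by (rule Sharp_DerI)
  then have "D \<in> Der" by (simp add: DerI_def)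
  then show "cong I (w D D) 0" using w_W[OF w PI D D] W_self by simp
next
  have ideal: "is_ideal I" using PI by (simp add: poisson_ideal_def)
  fix X0 X1 X2 assume "X0 \<in> Sharp pb I" "X1 \<in> Sharp pb I" "X2 \<in> Sharp pb I"
  then have X0: "X0 \<in> DerI I" and X1: "X1 \<in> DerI I" and X2: "X2 \<in> DerI I"
    by (auto intro: Sharp_DerI)
  have D0: "X0 \<in> Der" and D1: "X1 \<in> Der" and D2: "X2 \<in> Der"
    using X0 X1 X2 by (auto simp: DerI_def)
  have c01: "commD X0 X1 \<in> DerI I" and c02: "commD X0 X2 \<in> DerI I" and c12: "commD X1 X2 \<in> DerI I"
    using X0 X1 X2 ideal by (auto intro: commD_DerI)
  have t1: "cong I (X0 (w X1 X2)) (X0 (W X1 X2))" by (rule cong_DerI[OF X0 w_W[OF w PI X1 X2]])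
  have t2: "cong I (X1 (w X0 X2)) (X1 (W X0 X2))" by (rule cong_DerI[OF X1 w_W[OF w PI X0 X2]])
  have t3: "cong I (X2 (w X0 X1)) (X2 (W X0 X1))" by (rule cong_DerI[OF X2 w_W[OF w PI X0 X1]])
  have t4: "cong I (w (commD X0 X1) X2) (W (commD X0 X1) X2)" by (rule w_W[OF w PI c01 X2])
  have t5: "cong I (w (commD X0 X2) X1) (W (commD X0 X2) X1)" by (rule w_W[OF w PI c02 X1])
  have t6: "cong I (w (commD X1 X2) X0) (W (commD X1 X2) X0)" by (rule w_W[OF w PI c12 X0])
  have "cong I (dR2 w X0 X1 X2) (dR2 W X0 X1 X2)"
    unfolding dR2_def
    by (intro cong_sub[OF ideal] cong_add[OF ideal] t1 t2 t3 t4 t5 t6)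
  then show "cong I (dR2 w X0 X1 X2) 0" using dR2_closed[OF D0 D1 D2] by simp
qed

end

theorem mainTheorem2:
  fixes pb :: "('n::finite, 'k::field_char_0) mpoly \<Rightarrow> ('n, 'k) mpoly \<Rightarrow> ('n, 'k) mpoly"
    and I :: "('n, 'k) mpoly set"
  assumes "poisson_bracket pb"
    and "symplectic pb"
    and "poisson_ideal pb I"
  shows "(\<exists>w. omegaHam pb I w)
    \<and> (\<forall>w. omegaHam pb I w \<longrightarrow>
          (\<forall>D\<in>Sharp pb I. cong I (w D D) 0) \<and>
          (\<forall>X0\<in>Sharp pb I. \<forall>X1\<in>Sharp pb I. \<forall>X2\<in>Sharp pb I.
              cong I (dR2 w X0 X1 X2) 0))"
proof -
  obtain Q where "\<forall>i j. (\<Sum>l\<in>UNIV. pb (Var i) (Var l) * Q l j) = (if i = j then 1 else 0)"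
    "\<forall>i j. (\<Sum>l\<in>UNIV. Q i l * pb (Var l) (Var j)) = (if i = j then 1 else 0)"
    using assms(2) unfolding symplectic_def by blast
  then interpret sympl pb Q using assms(1) by unfold_locales auto
  show ?thesis using part1[OF assms(3)] part2[OF _ assms(3)] by blast
qed

end
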